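(* Let $r>2-\sqrt2-\ln\big(2\sqrt2-2\big)$ be fixed and consider the one-parameter family of maps $f(x,k)=x^2\exp(r-x)+k$ with bifurcation parameter $k$. Then there is a unique point $x(r)\in(0,2-\sqrt2)$ and a unique parameter value $k^*$ such that $x(r)$ is a fixed point of $f(\cdot,k^* )$ in the interval $(0,2-\sqrt2)$ and the family undergoes a fold bifurcation at $x(r)$ with respect to $k$ at the bifurcation value $k=k^*$. Moreover, \[ k^*=x(r)-\frac{x(r)}{2-x(r)}. \]
   Context: For a smooth one-parameter family $x\mapsto f(x,a)$ of maps of $\mathbb{R}$ with a fixed point $x_0$ at $a=a_0$, one says that a fold (saddle-node) bifurcation occurs at $x_0$ for $a=a_0$ if $\frac{\partial f}{\partial x}(x_0,a_0)=1$ and the nondegeneracy conditions (A.1) $\frac{\partial^2 f}{\partial x^2}(x_0,a_0)\neq0$ and (A.2) $\frac{\partial f}{\partial a}(x_0,a_0)\neq 0$ hold; then smooth invertible changes of coordinates and parameter transform the system into $\eta\mapsto\beta+\eta\pm\eta^2+O(\eta^3)$. *)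

theory Defs
  imports "HOL-Analysis.Analysis"
begin

text \<open>Differentiability requirements make the derivatives meaningful.\<close>

definition fold_bifurcation :: "(real \<Rightarrow> real \<Rightarrow> real) \<Rightarrow> real \<Rightarrow> real \<Rightarrow> bool" where
  "fold_bifurcation f x0 a0 \<longleftrightarrow>
     f x0 a0 = x0 \<and>
     (\<forall>\<^sub>F x in nhds x0. (\<lambda>y. f y a0) differentiable at x) \<and>
     deriv (\<lambda>y. f y a0) x0 = 1 \<and>
     deriv (\<lambda>y. f y a0) differentiable at x0 \<and>
     deriv (deriv (\<lambda>y. f y a0)) x0 \<noteq> 0 \<and>
     (\<lambda>a. f x0 a) differentiable at a0 \<and>
     deriv (\<lambda>a. f x0 a) a0 \<noteq> 0"

end

theory Submission
  imports Defs
begin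

lemma d1: "((\<lambda>y. y\<^sup>2 * exp (r - y) + k) has_real_derivative (2*x - x\<^sup>2) * exp (r - x)) (at x)"
  by (auto intro!: derivative_eq_intros simp: algebra_simps power2_eq_square)

lemma d2: "((\<lambda>y. (2*y - y\<^sup>2) * exp (r - y)) has_real_derivative (2 - 4*x + x\<^sup>2) * exp (r - x)) (at x)"
  by (auto intro!: derivative_eq_intros simp: algebra_simps power2_eq_square)

lemma deriv1: "deriv (\<lambda>y. y\<^sup>2 * exp (r - y) + k) = (\<lambda>x::real. (2*x - x\<^sup>2) * exp (r - x))"
  using d1 DERIV_imp_deriv by (intro ext) blast

lemma deriv2: "deriv (\<lambda>y. (2*y - y\<^sup>2) * exp (r - y)) = (\<lambda>x::real. (2 - 4*x + x\<^sup>2) * exp (r - x))"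
  using d2 DERIV_imp_deriv by (intro ext) blast

lemma dk: "((\<lambda>a. c + a) has_real_derivative 1) (at k)"
  by (auto intro!: derivative_eq_intros)

lemma pos2: assumes "0 < c" "c < 2 - sqrt 2" shows "0 < 2 - 4*c + c\<^sup>2"
proof -
  have s: "sqrt 2 * sqrt 2 = 2" by simp
  have "0 < (2 - sqrt 2 - c) * (2 + sqrt 2 - c)"
    using assms real_sqrt_ge_zero[of 2] by (intro mult_pos_pos) linarith+
  also have "\<dots> = 2 - 4*c + c\<^sup>2" by (simp add: algebra_simps power2_eq_square s)
  finally show ?thesis .
qed

lemma fold_iff:
  assumes "f \<equiv> (\<lambda>x k. x\<^sup>2 * exp (r - x) + k)" "0 < y" "y < 2 - sqrt 2"
  shows "fold_bifurcation f y j \<longleftrightarrow> y\<^sup>2 * exp (r - y) + j = y \<and> (2*y - y\<^sup>2) * exp (r - y) = 1"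
proof -
  have dd: "(\<lambda>y. f y j) differentiable at x" for x
    unfolding assms(1) using d1 real_differentiable_def by blast
  have h: "(\<lambda>y. (2*y - y\<^sup>2) * exp (r - y)) differentiable at y"
    using d2 real_differentiable_def by blast
  have ka: "(\<lambda>a. f y a) differentiable at j" "deriv (\<lambda>a. f y a) j = 1"
    unfolding assms(1) using dk[of "y\<^sup>2 * exp (r - y)" j] DERIV_imp_deriv real_differentiable_def by blast+
  have "0 < 2 - 4*y + y\<^sup>2" using pos2 assms by simp
  then have "2 - 4*y + y\<^sup>2 \<noteq> 0" by simp
  then show ?thesis
    unfolding fold_bifurcation_def using dd h ka
    by (simp add: assms(1) deriv1 deriv2 always_eventually)
qed

theorem theorem2p4:
  fixes r :: real
  assumes "r > 2 - sqrt 2 - ln (2 * sqrt 2 - 2)"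
  defines "f \<equiv> (\<lambda>x k. x\<^sup>2 * exp (r - x) + k)"
  shows "\<exists>x k. x \<in> {0<..<2 - sqrt 2} \<and> fold_bifurcation f x k
           \<and> (\<forall>y j. y \<in> {0<..<2 - sqrt 2} \<and> fold_bifurcation f y j \<longrightarrow> y = x \<and> j = k)
           \<and> k = x - x / (2 - x)"
proof -
  define h where "h = (\<lambda>y::real. (2*y - y\<^sup>2) * exp (r - y))"
  define b where "b = 2 - sqrt 2"
  have s: "sqrt 2 * sqrt 2 = 2" by simp
  have s1: "1 < sqrt 2" "sqrt 2 < 2" using real_sqrt_less_iff[of 2 4] by (auto simp: real_less_rsqrt)
  have b0: "0 < b" using s1 by (simp add: b_def)
  have hcont: "continuous_on A h" for A
    unfolding h_def by (intro continuous_intros)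
  have hb1: "2*b - b\<^sup>2 = 2 * sqrt 2 - 2" by (simp add: b_def algebra_simps power2_eq_square s)
  have pos: "0 < 2 * sqrt 2 - 2" using s1 by simp
  have "- ln (2 * sqrt 2 - 2) < r - b" using assms(1) by (simp add: b_def)
  hence "exp (- ln (2 * sqrt 2 - 2)) < exp (r - b)" by simp
  hence "1 / (2 * sqrt 2 - 2) < exp (r - b)" using pos by (simp add: exp_minus inverse_eq_divide)
  hence hb: "1 < h b" unfolding h_def hb1 using pos by (simp add: field_simps)
  have h0: "h 0 = 0" by (simp add: h_def)
  have mono: "h u < h v" if "0 \<le> u" "u < v" "v \<le> b" for u v
  proof (rule DERIV_pos_imp_increasing_open[OF that(2) _ hcont])
    fix x assume "u < x" "x < v"
    then have "0 < (2 - 4*x + x\<^sup>2) * exp (r - x)" using pos2[of x] that by (simp add: b_def)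
    then show "\<exists>y. (h has_real_derivative y) (at x) \<and> 0 < y" unfolding h_def using d2 by blast
  qed
  obtain x where x: "0 \<le> x" "x \<le> b" "h x = 1"
    using IVT'[of h 0 1 b] h0 hb b0 hcont by force
  have x0: "0 < x" using x h0 by (cases "x = 0") auto
  have xb: "x < b" using x hb by (cases "x = b") auto
  have huniq: "y = x" if "0 < y" "y < b" "h y = 1" for y
    using mono[of x y] mono[of y x] that x0 xb x by (cases "x < y"; cases "y < x") auto
  define k where "k = x - x\<^sup>2 * exp (r - x)"
  have x2: "x < 2" using xb s1 unfolding b_def by linarith
  have e: "exp (r - x) = 1 / (2*x - x\<^sup>2)" using x(3) x0 x2 unfolding h_def
    by (simp add: field_simps power2_eq_square)
  have kform: "k = x - x / (2 - x)" unfolding k_def e using x0 x2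
    by (simp add: field_simps power2_eq_square)
  show ?thesis
  proof (intro exI conjI allI impI)
    show "x \<in> {0<..<2 - sqrt 2}" using x0 xb by (simp add: b_def)
    show "fold_bifurcation f x k" using fold_iff[OF f_def x0] xb x(3)
      by (simp add: b_def k_def h_def)
    show "k = x - x / (2 - x)" by (rule kform)
    fix y j assume a: "y \<in> {0<..<2 - sqrt 2} \<and> fold_bifurcation f y j"
    then have "y\<^sup>2 * exp (r - y) + j = y \<and> h y = 1"
      using fold_iff[OF f_def, of y j] by (simp add: h_def)
    moreover have "y = x" using huniq a calculation by (simp add: b_def)
    ultimately show "y = x" "j = k" by (auto simp: k_def)
  qed
qed

end
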